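(* Let $k$ be a field and let $A$ be a $k$-algebra with filtration $A_0\subseteq A_1\subseteq\cdots$ (subspaces with $\bigcup_nA_n=A$ and $A_iA_j\subseteq A_{i+j}$). Let $R=\bigoplus_{n\ge0}x^nA_n\subseteq A[x]$ be the Rees algebra. Let $a(x)=a_1x+\cdots+a_mx^m\in R$ with $a_i\in A_i$, and suppose $a(x)$ is integral over $k[x]$. Then $a(x)^N\in xR$ for some $N\ge0$.
   Context: $A$ is associative with unit, $A[x]$ is the polynomial algebra over $A$ in a central indeterminate $x$, and $k[x]\subseteq A[x]$ via $k\subseteq A$. An element $a(x)\in A[x]$ is integral over $k[x]$ if $a(x)^n+p_{n-1}(x)a(x)^{n-1}+\cdots+p_0(x)=0$ for some $n\ge1$ and $p_i(x)\in k[x]$. Here $xR=\bigoplus_{n\ge1}x^nA_{n-1}$. *)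

theory Defs
  imports "HOL-Computational_Algebra.Formal_Power_Series" "HOL-Computational_Algebra.Polynomial"
begin

text \<open>The polynomial algebra A[x] over a (possibly noncommutative) ring A is modelled
  as the formal power series over A with finite support.\<close>

definition is_apoly :: "'a::zero fps \<Rightarrow> bool" where
  "is_apoly f \<longleftrightarrow> finite {n. fps_nth f n \<noteq> 0}"

definition k_algebra :: "('k::field \<Rightarrow> 'a::ring_1) \<Rightarrow> bool" where
  "k_algebra phi \<longleftrightarrow>
     phi 1 = 1 \<and> (\<forall>c d. phi (c + d) = phi c + phi d) \<and>
     (\<forall>c d. phi (c * d) = phi c * phi d) \<and> (\<forall>c y. phi c * y = y * phi c)"

definition k_subspace :: "('k::field \<Rightarrow> 'a::ring_1) \<Rightarrow> 'a set \<Rightarrow> bool" where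
  "k_subspace phi V \<longleftrightarrow> 0 \<in> V \<and> (\<forall>u\<in>V. \<forall>v\<in>V. u + v \<in> V) \<and> (\<forall>c. \<forall>v\<in>V. phi c * v \<in> V)"

definition algebra_filtration :: "('k::field \<Rightarrow> 'a::ring_1) \<Rightarrow> (nat \<Rightarrow> 'a set) \<Rightarrow> bool" where
  "algebra_filtration phi Af \<longleftrightarrow>
     (\<forall>n. k_subspace phi (Af n)) \<and> (\<forall>n. Af n \<subseteq> Af (Suc n)) \<and>
     (\<Union>n. Af n) = UNIV \<and>
     (\<forall>i j. \<forall>u\<in>Af i. \<forall>v\<in>Af j. u * v \<in> Af (i + j))"

text \<open>Rees algebra R = (+)_{n>=0} x^n A_n inside A[x], and xR = (+)_{n>=1} x^n A_{n-1}.\<close>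

definition rees :: "(nat \<Rightarrow> 'a::ring_1 set) \<Rightarrow> 'a fps set" where
  "rees Af = {f. is_apoly f \<and> (\<forall>n. fps_nth f n \<in> Af n)}"

definition x_rees :: "(nat \<Rightarrow> 'a::ring_1 set) \<Rightarrow> 'a fps set" where
  "x_rees Af = {f. is_apoly f \<and> fps_nth f 0 = 0 \<and> (\<forall>n\<ge>1. fps_nth f n \<in> Af (n - 1))}"

definition kpoly_to :: "('k::field \<Rightarrow> 'a::ring_1) \<Rightarrow> 'k poly \<Rightarrow> 'a fps" where
  "kpoly_to phi p = Abs_fps (\<lambda>j. phi (coeff p j))"

definition integral_over_kx :: "('k::field \<Rightarrow> 'a::ring_1) \<Rightarrow> 'a fps \<Rightarrow> bool" where
  "integral_over_kx phi a \<longleftrightarrow>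
     (\<exists>n\<ge>1. \<exists>p :: nat \<Rightarrow> 'k poly. a ^ n + (\<Sum>i<n. kpoly_to phi (p i) * a ^ i) = 0)"

end

theory Submission
  imports Defs
begin

notation fps_nth (infixl \<open>$\<close> 75)

lemma ksub_sum:
  assumes "k_subspace phi V" "\<forall>i\<in>S. f i \<in> V"
  shows "sum f S \<in> V"
proof (cases "finite S")
  case True
  then show ?thesis using assms(2)
  proof (induction S rule: finite_induct)
    case empty then show ?case using assms(1) by (simp add: k_subspace_def)
  next
    case (insert x S) then show ?case using assms(1) by (simp add: k_subspace_def)
  qed
next
  case False then show ?thesis using assms(1) by (simp add: k_subspace_def)
qed

lemma coef_in:
  assumes "k_subspace phi V" "\<forall>i\<le>m. f $ i * g $ (m-i) \<in> V"
  shows "(f*g) $ m \<in> V"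
  unfolding fps_mult_nth using assms by (intro ksub_sum) auto

lemma apoly_iff: "is_apoly f \<longleftrightarrow> (\<exists>D. \<forall>n>D. f $ n = 0)"
proof
  assume "is_apoly f"
  then obtain D where "\<forall>n\<in>{n. f $ n \<noteq> 0}. n \<le> D"
    unfolding is_apoly_def finite_nat_set_iff_bounded_le by blast
  then have "\<forall>n>D. f $ n = 0" by force
  then show "\<exists>D. \<forall>n>D. f $ n = 0" by blast
next
  assume "\<exists>D. \<forall>n>D. f $ n = 0"
  then obtain D where D: "\<forall>n>D. f $ n = 0" by blast
  have "\<forall>n\<in>{n. f $ n \<noteq> 0}. n \<le> D" using D not_le by blast
  then show "is_apoly f" unfolding is_apoly_def finite_nat_set_iff_bounded_le by blast
qed

lemma apoly_mult:
  fixes f g :: "'a::ring_1 fps"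
  assumes "is_apoly f" "is_apoly g" shows "is_apoly (f*g)"
proof -
  obtain D1 where D1: "\<forall>n>D1. f $ n = 0" using assms(1) apoly_iff by blast
  obtain D2 where D2: "\<forall>n>D2. g $ n = 0" using assms(2) apoly_iff by blast
  have "\<forall>n>D1+D2. (f*g) $ n = 0"
  proof (intro allI impI)
    fix n assume n: "n > D1+D2"
    have "\<forall>i\<in>{0..n}. f $ i * g $ (n-i) = 0"
    proof
      fix i assume "i \<in> {0..n}"
      then show "f $ i * g $ (n-i) = 0"
        using D1 D2 n by (cases "i > D1") auto
    qed
    then show "(f*g) $ n = 0" unfolding fps_mult_nth by simp
  qed
  then show ?thesis using apoly_iff by blast
qed

lemma apoly_power: "is_apoly (f::'a::ring_1 fps) \<Longrightarrow> is_apoly (f^n)"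
proof (induction n)
  case 0 then show ?case unfolding apoly_iff by (intro exI[of _ 0]) simp
next
  case (Suc n) then show ?case by (simp add: apoly_mult)
qed

context
  fixes phi :: "'k::field \<Rightarrow> 'a::ring_1" and F :: "nat \<Rightarrow> 'a set"
  assumes kA: "k_algebra phi" and fil: "algebra_filtration phi F"
begin

notation fps_nth (infixl \<open>$\<close> 75)

lemma phi_add: "phi (c + d) = phi c + phi d" using kA unfolding k_algebra_def by blast
lemma phi_mult: "phi (c * d) = phi c * phi d" using kA unfolding k_algebra_def by blast
lemma phi_one: "phi 1 = 1" using kA unfolding k_algebra_def by blast
lemma phi_comm: "phi c * y = y * phi c" using kA unfolding k_algebra_def by blast
lemma phi_zero: "phi 0 = 0"
  using phi_add[of 0 0] by simp

lemma ksub_neg: "k_subspace phi V \<Longrightarrow> v \<in> V \<Longrightarrow> -v \<in> V"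
proof -
  assume V: "k_subspace phi V" and v: "v \<in> V"
  have "phi (-1) + phi 1 = 0" using phi_add[of "-1" 1] phi_zero by simp
  then have "phi (-1) = -1" using phi_one by (simp add: eq_neg_iff_add_eq_0)
  then have e: "-v = phi (-1) * v" by simp
  have "\<forall>c. \<forall>v\<in>V. phi c * v \<in> V" using V unfolding k_subspace_def by blast
  then have "phi (-1) * v \<in> V" using v by blast
  then show ?thesis unfolding e .
qed

lemma ksub_diff: "k_subspace phi V \<Longrightarrow> u \<in> V \<Longrightarrow> v \<in> V \<Longrightarrow> u - v \<in> V"
  using ksub_neg[of V v] unfolding k_subspace_def diff_conv_add_uminus by blast

lemma F_sub: "k_subspace phi (F n)"
proof -
  have "\<forall>n. k_subspace phi (F n)" using fil unfolding algebra_filtration_def by (elim conjE) assumption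
  then show ?thesis by blast
qed
lemma F_mult: "u \<in> F i \<Longrightarrow> v \<in> F j \<Longrightarrow> u * v \<in> F (i + j)"
proof -
  assume "u \<in> F i" "v \<in> F j"
  moreover have "\<forall>i j. \<forall>u\<in>F i. \<forall>v\<in>F j. u * v \<in> F (i + j)"
    using fil unfolding algebra_filtration_def by (elim conjE) assumption
  ultimately show ?thesis by blast
qed
lemma F_mono: "i \<le> j \<Longrightarrow> F i \<subseteq> F j"
proof -
  assume ij: "i \<le> j"
  have "\<forall>n. F n \<subseteq> F (Suc n)" using fil unfolding algebra_filtration_def by (elim conjE) assumption
  then have "\<And>n. F n \<subseteq> F (Suc n)" by blast
  from lift_Suc_mono_le[of F, OF this ij] show ?thesis .
qed
lemma F_cover: "\<exists>m. 1 \<in> F m"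
proof -
  have "(\<Union>n. F n) = UNIV" using fil unfolding algebra_filtration_def by (elim conjE) assumption
  then have "1 \<in> (\<Union>n. F n)" by simp
  then show ?thesis by blast
qed

definition W where "W n = {y + phi c | y c. y \<in> F n}"

lemma F0: "0 \<in> F n" using F_sub[of n] unfolding k_subspace_def by blast
lemma Fadd: "u \<in> F n \<Longrightarrow> v \<in> F n \<Longrightarrow> u + v \<in> F n"
  using F_sub[of n] unfolding k_subspace_def by blast
lemma Fscal: "v \<in> F n \<Longrightarrow> phi c * v \<in> F n"
  using F_sub[of n] unfolding k_subspace_def by blast

lemma W_I: "y \<in> F n \<Longrightarrow> y + phi c \<in> W n"
  unfolding W_def by blast

lemma W_E: "u \<in> W n \<Longrightarrow> (\<And>y c. u = y + phi c \<Longrightarrow> y \<in> F n \<Longrightarrow> P) \<Longrightarrow> P"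
  unfolding W_def by blast

lemma W_sub: "k_subspace phi (W n)"
  unfolding k_subspace_def
proof (intro conjI ballI allI)
  have "(0::'a) = 0 + phi 0" using phi_zero by simp
  then show "0 \<in> W n" using W_I[OF F0, where c=0] by simp
next
  fix u v assume uv: "u \<in> W n" "v \<in> W n"
  obtain y c where "u = y + phi c" "y \<in> F n" using W_E[OF uv(1)] by blast
  moreover obtain z d where "v = z + phi d" "z \<in> F n" using W_E[OF uv(2)] by blast
  ultimately have yc: "u = y + phi c" "v = z + phi d" "y \<in> F n" "z \<in> F n" by auto
  have "u + v = (y + z) + phi (c + d)" unfolding yc(1,2) phi_add by (simp add: add_ac)
  then show "u + v \<in> W n" using W_I[OF Fadd[OF yc(3) yc(4)], where c="c + d"] by simp
next
  fix e v assume v: "v \<in> W n"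
  obtain y c where yc: "v = y + phi c" "y \<in> F n" using W_E[OF v] by blast
  have "phi e * v = phi e * y + phi (e * c)" unfolding yc(1) phi_mult by (simp add: distrib_left)
  then show "phi e * v \<in> W n" using W_I[OF Fscal[OF yc(2), where c=e], where c="e * c"] by simp
qed

lemma F_W: "y \<in> F n \<Longrightarrow> y \<in> W n"
  using W_I[of y n 0] phi_zero by simp

lemma phi_W: "phi c \<in> W n"
  using W_I[OF F0, where c=c] by simp

lemma W_mono: "i \<le> j \<Longrightarrow> W i \<subseteq> W j"
  unfolding W_def using F_mono by blast

lemma W_mult: "u \<in> W i \<Longrightarrow> v \<in> W j \<Longrightarrow> u * v \<in> W (i + j)"
proof -
  assume uW: "u \<in> W i" and vW: "v \<in> W j"
  obtain y c where u: "u = y + phi c" "y \<in> F i" using W_E[OF uW] by blast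
  obtain z d where v: "v = z + phi d" "z \<in> F j" using W_E[OF vW] by blast
  have "u * v = y * z + y * phi d + phi c * z + phi c * phi d"
    unfolding u(1) v(1) by (simp add: distrib_left distrib_right add_ac)
  also have "\<dots> = (y * z + phi d * y + phi c * z) + phi (c * d)"
    unfolding phi_mult phi_comm[of d y] by simp
  finally have uv: "u * v = (y * z + phi d * y + phi c * z) + phi (c * d)" .
  have "y * z \<in> F (i+j)" using F_mult u v by blast
  moreover have "phi d * y \<in> F (i+j)" using Fscal[OF u(2)] F_mono[of i "i+j"] by auto
  moreover have "phi c * z \<in> F (i+j)" using Fscal[OF v(2)] F_mono[of j "i+j"] by auto
  ultimately show ?thesis unfolding uv by (intro W_I Fadd) assumption+
qed

definition B where "B n = (if n = 0 then {0} else W (n - 1))"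

lemma B_sub: "k_subspace phi (B n)"
proof (cases "n = 0")
  case True
  then show ?thesis unfolding B_def k_subspace_def by simp
next
  case False
  then show ?thesis unfolding B_def using W_sub[of "n - 1"] by simp
qed

lemma B_W: "u \<in> B n \<Longrightarrow> u \<in> W n"
proof (cases "n = 0")
  case True
  assume "u \<in> B n"
  then have "u = 0" using True unfolding B_def by simp
  then show ?thesis using W_sub[of n] unfolding k_subspace_def by simp
next
  case False
  assume "u \<in> B n"
  then have "u \<in> W (n - 1)" using False unfolding B_def by simp
  then show ?thesis using W_mono[of "n - 1" n] by auto
qed

lemma B_mult: "u \<in> B k \<Longrightarrow> v \<in> W l \<Longrightarrow> u * v \<in> B (k + l)"
proof (cases "k = 0")
  case True
  assume "u \<in> B k"
  then have "u = 0" using True unfolding B_def by simp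
  then show ?thesis using B_sub[of "k+l"] unfolding k_subspace_def by simp
next
  case False
  assume u: "u \<in> B k" and v: "v \<in> W l"
  from u False have "u \<in> W (k-1)" by (simp add: B_def)
  then have "u * v \<in> W (k - 1 + l)" using W_mult v by blast
  moreover have "k - 1 + l = k + l - 1" using False by simp
  ultimately show ?thesis using False by (simp add: B_def)
qed

lemma powW: "\<forall>n. a $ n \<in> F n \<Longrightarrow> (a^i) $ n \<in> W n"
proof (induction i arbitrary: n)
  case 0
  show ?case
  proof (cases "n = 0")
    case True
    then show ?thesis using phi_W[of 1 0] unfolding phi_one by simp
  next
    case False
    then show ?thesis using W_sub[of n] unfolding k_subspace_def by simp
  qed
next
  case (Suc i)
  show ?case unfolding power_Suc
  proof (rule coef_in[OF W_sub], intro allI impI)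
    fix k assume "k \<le> n"
    then show "a $ k * (a^i) $ (n-k) \<in> W n"
      using W_mult[OF F_W[of "a $ k" k] Suc.IH[of "n-k"]] Suc.prems by simp
  qed
qed

end

theorem lemma5p2:
  fixes phi :: "'k::field \<Rightarrow> 'a::ring_1"
    and Af :: "nat \<Rightarrow> 'a set"
    and a :: "'a fps"
  assumes "k_algebra phi"
    and "algebra_filtration phi Af"
    and "a \<in> rees Af"
    and "fps_nth a 0 = 0"
    and "integral_over_kx phi a"
  shows "\<exists>N::nat. a ^ N \<in> x_rees Af"
proof -
  note kA = assms(1) and fil = assms(2)
  have Bdef: "B phi Af m = (if m = 0 then {0} else W phi Af (m - 1))" for m
    using B_def[OF kA fil] by blast
  have Wdef: "W phi Af m = {y + phi c | y c. y \<in> Af m}" for m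
    using W_def[OF kA fil] by blast
  have aF: "\<forall>n. a $ n \<in> Af n" using assms(3) by (simp add: rees_def)
  have a_apoly: "is_apoly a" using assms(3) by (simp add: rees_def)
  obtain n p where n1: "n \<ge> 1" and E: "a ^ n + (\<Sum>i<n. kpoly_to phi (p i) * a ^ i) = 0"
    using assms(5) unfolding integral_over_kx_def by blast
  have kp_nth: "\<And>q j. kpoly_to phi q $ j = phi (coeff q j)" by (simp add: kpoly_to_def)
  define c where "c i = (if i = n then 1 else coeff (p i) 0)" for i
  define T where "T i = (fps_const (phi (c i)) - kpoly_to phi (p i)) * a ^ i" for i
  have TB: "T i $ m \<in> B phi Af m" if "i < n" for i m
  proof -
    define h where "h = fps_const (phi (c i)) - kpoly_to phi (p i)"
    have hB: "h $ k \<in> B phi Af k" for k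
    proof (cases "k = 0")
      case True then show ?thesis using that by (simp add: h_def c_def kp_nth Bdef)
    next
      case False
      have "h $ k = - phi (coeff (p i) k)" using False by (simp add: h_def kp_nth)
      moreover have "- phi (coeff (p i) k) \<in> W phi Af (k - 1)"
        using ksub_neg[OF kA fil W_sub[OF kA fil] phi_W[OF kA fil]] by blast
      ultimately show ?thesis using False by (simp add: Bdef)
    qed
    show ?thesis unfolding T_def h_def[symmetric]
    proof (rule coef_in[OF B_sub[OF kA fil]], intro allI impI)
      fix k assume "k \<le> m"
      then show "h $ k * (a ^ i) $ (m - k) \<in> B phi Af m"
        using B_mult[OF kA fil hB[of k] powW[OF kA fil aF, where i=i and n="m - k"]] by simp
    qed
  qed
  define S where "S = (\<Sum>i\<le>n. fps_const (phi (c i)) * a ^ i)"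
  have S1: "S = (\<Sum>i<n. fps_const (phi (c i)) * a ^ i) + a ^ n"
    unfolding S_def lessThan_Suc_atMost[symmetric] sum.lessThan_Suc
    using phi_one[OF kA fil] by (simp add: c_def)
  have S3: "(\<Sum>i<n. fps_const (phi (c i)) * a ^ i) = (\<Sum>i<n. T i + kpoly_to phi (p i) * a ^ i)"
    by (rule sum.cong) (simp_all add: T_def left_diff_distrib)
  have Seq: "S = (\<Sum>i<n. T i)"
  proof -
    have "S = (\<Sum>i<n. T i) + ((\<Sum>i<n. kpoly_to phi (p i) * a ^ i) + a ^ n)"
      unfolding S1 S3 sum.distrib by (simp only: add.assoc)
    also have "(\<Sum>i<n. kpoly_to phi (p i) * a ^ i) + a ^ n = 0" using E by (simp only: add.commute)
    finally show ?thesis by simp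
  qed
  have SB: "S $ m \<in> B phi Af m" for m
    unfolding Seq fps_sum_nth using TB by (intro ksub_sum[OF B_sub[OF kA fil]]) auto
  define j where "j = (LEAST i. c i \<noteq> 0)"
  have cn: "c n \<noteq> 0" by (simp add: c_def)
  have jn: "j \<le> n" unfolding j_def using cn by (rule Least_le)
  have cj: "c j \<noteq> 0" unfolding j_def using cn by (rule LeastI)
  have cbelow: "c i = 0" if "i < j" for i using that not_less_Least j_def by blast
  have "S = (\<Sum>i\<in>{j..n}. fps_const (phi (c i)) * a ^ i)"
    unfolding S_def by (rule sum.mono_neutral_right) (auto simp: cbelow phi_zero[OF kA fil])
  also have "{j..n} = insert j {Suc j..n}" using jn by auto
  finally have S2: "S = fps_const (phi (c j)) * a ^ j + (\<Sum>i\<in>{Suc j..n}. fps_const (phi (c i)) * a ^ i)"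
    by simp
  have a0pow: "(a ^ r) $ 0 = 0" if "r \<ge> 1" for r
    using that assms(4) by (simp add: fps_power_zeroth power_0_left)
  have bB: "(a ^ j) $ m \<in> B phi Af m" for m
  proof (induction m rule: less_induct)
    case (less m)
    have rest: "(fps_const (phi (c i)) * a ^ i) $ m \<in> B phi Af m" if "i \<in> {Suc j..n}" for i
    proof -
      have ai: "a ^ i = a ^ j * a ^ (i - j)" using that by (simp add: power_add[symmetric])
      have "(a ^ j * a ^ (i - j)) $ m \<in> B phi Af m"
      proof (rule coef_in[OF B_sub[OF kA fil]], intro allI impI)
        fix k assume km: "k \<le> m"
        show "(a ^ j) $ k * (a ^ (i - j)) $ (m - k) \<in> B phi Af m"
        proof (cases "k = m")
          case True
          have "i - j \<ge> 1" using that by auto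
          then have "(a ^ (i - j)) $ 0 = 0" using a0pow by blast
          then show ?thesis using True B_sub[OF kA fil, of m]
            by (simp add: k_subspace_def)
        next
          case False
          then have "k < m" using km by simp
          then show ?thesis using B_mult[OF kA fil less[OF \<open>k < m\<close>] powW[OF kA fil aF, where i="i - j" and n="m - k"]] km by simp
        qed
      qed
      then show ?thesis using B_sub[OF kA fil, of m] ai by (simp add: k_subspace_def)
    qed
    have "(\<Sum>i\<in>{Suc j..n}. fps_const (phi (c i)) * a ^ i) $ m \<in> B phi Af m"
      unfolding fps_sum_nth using rest by (intro ksub_sum[OF B_sub[OF kA fil]]) auto
    then have "S $ m - (\<Sum>i\<in>{Suc j..n}. fps_const (phi (c i)) * a ^ i) $ m \<in> B phi Af m"
      using ksub_diff[OF kA fil B_sub[OF kA fil] SB[of m]] by blast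
    moreover have "S $ m - (\<Sum>i\<in>{Suc j..n}. fps_const (phi (c i)) * a ^ i) $ m = phi (c j) * (a ^ j) $ m"
      unfolding S2 by simp
    ultimately have "phi (c j) * (a ^ j) $ m \<in> B phi Af m" by simp
    then have "phi (inverse (c j)) * (phi (c j) * (a ^ j) $ m) \<in> B phi Af m"
      using B_sub[OF kA fil, of m] by (simp add: k_subspace_def)
    moreover have "phi (inverse (c j)) * (phi (c j) * (a ^ j) $ m) = (a ^ j) $ m"
      using cj phi_mult[OF kA fil, where c="inverse (c j)" and d="c j", symmetric] phi_one[OF kA fil]
      by (simp add: mult.assoc[symmetric])
    ultimately show ?case by simp
  qed
  define b where "b = a ^ j"
  have b0: "b $ 0 = 0" using bB[of 0] by (simp add: b_def Bdef)
  have powB: "(b ^ Suc M) $ m \<in> B phi Af m" for M m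
  proof (induction M arbitrary: m)
    case 0 then show ?case using bB by (simp add: b_def)
  next
    case (Suc M)
    show ?case unfolding power_Suc[of b "Suc M"]
    proof (rule coef_in[OF B_sub[OF kA fil]], intro allI impI)
      fix k assume "k \<le> m"
      then show "b $ k * (b ^ Suc M) $ (m - k) \<in> B phi Af m"
        using B_mult[OF kA fil bB[of k, folded b_def] B_W[OF kA fil Suc.IH[of "m - k"]]] by simp
    qed
  qed
  have vanish: "\<forall>m<M. (b ^ M) $ m = 0" for M
  proof (induction M)
    case 0 then show ?case by simp
  next
    case (Suc M)
    show ?case
    proof (intro allI impI)
      fix m assume m: "m < Suc M"
      have "\<forall>k\<in>{0..m}. b $ k * (b ^ M) $ (m - k) = 0"
      proof
        fix k assume "k \<in> {0..m}"
        then show "b $ k * (b ^ M) $ (m - k) = 0"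
          using Suc.IH b0 m by (cases "k = 0") auto
      qed
      then show "(b ^ Suc M) $ m = 0" unfolding power_Suc fps_mult_nth by simp
    qed
  qed
  obtain m0 where m0: "1 \<in> Af m0" using F_cover[OF kA fil] by blast
  define M where "M = Suc m0"
  have "b ^ M \<in> x_rees Af"
    unfolding x_rees_def
  proof (intro CollectI conjI allI impI)
    show "is_apoly (b ^ M)" unfolding b_def by (intro apoly_power a_apoly)
    show "(b ^ M) $ 0 = 0" using powB[of m0 0] by (simp add: M_def Bdef)
  next
    fix q :: nat assume q: "q \<ge> 1"
    show "(b ^ M) $ q \<in> Af (q - 1)"
    proof (cases "q < M")
      case True
      then show ?thesis using vanish[of M] F_sub[OF kA fil, of "q - 1"] by (simp add: k_subspace_def)
    next
      case False
      then have "(b ^ M) $ q \<in> W phi Af (q - 1)" using powB[of m0 q] q by (simp add: M_def Bdef)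
      then obtain y d where yd: "(b ^ M) $ q = y + phi d" "y \<in> Af (q - 1)" unfolding Wdef by blast
      have "phi d * 1 \<in> Af m0" using m0 F_sub[OF kA fil, of m0] unfolding k_subspace_def by blast
      moreover have "m0 \<le> q - 1" using False by (simp add: M_def)
      ultimately have "phi d \<in> Af (q - 1)" using F_mono[OF kA fil, of m0 "q - 1"] by auto
      then show ?thesis using yd F_sub[OF kA fil, of "q - 1"] by (simp add: k_subspace_def)
    qed
  qed
  then have "a ^ (j * M) \<in> x_rees Af" by (simp add: b_def power_mult)
  then show ?thesis by blast
qed


end
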